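(* For all $M,N\in\Lambda^{001}$, if $M\longrightarrow_\beta^* N$ then $\mathcal T(M)\mathrel{\widetilde{\longrightarrow}_r^*}\mathcal T(N)$.
   Context: Fix a set $\mathcal V$ of variables. A 001-infinitary λ-term is a possibly infinite tree built from variables $x\in\mathcal V$, abstractions $\lambda x.M$ and applications $(M)N$ ($N$ the argument), such that every infinite branch enters infinitely often the argument position of an application node; $\Lambda^{001}$ denotes the set of such terms, up to α-equivalence, with fresh variables always available. $M[N/x]$ is capture-avoiding substitution (defined corecursively). One-step β-reduction $\longrightarrow_\beta$ is the contextual closure (under abstractions and on both sides of applications, each step with a finite derivation) of $(\lambda x.M)N\longrightarrow_\beta M[N/x]$; $\longrightarrow_\beta^*$ is its reflexive-transitive closure. Resource terms: $s::=x\mid\lambda x.s\mid\langle s\rangle\bar t$, $\bar t=[t_1,\dots,t_n]$ a finite multiset of resource terms. Finite sums are finite sets of resource terms written additively ($0$ empty), constructors extended by linearity. Resource substitution $s\langle\bar t/x\rangle$ is the sum over $\sigma\in\mathfrak S_n$ of the terms obtained by substituting $t_{\sigma(i)}$ for the $i$-th free occurrence of $x$ in $s$, if $x$ has exactly $n$ free occurrences in $s$, and $0$ otherwise. Simple resource reduction $\longmapsto_r$ is the least relation from terms (resp. monomials) to finite sums containing $\langle\lambda x.s\rangle\bar t\longmapsto_r s\langle\bar t/x\rangle$ and closed under abstraction, the function and argument positions of application, and elements of monomials ($s\longmapsto_r S\Rightarrow s\cdot\bar t\longmapsto_r S\cdot\bar t$). On finite sums, $\sum_{i=0}^n s_i\longrightarrow_r\sum_{i=0}^n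 T_i$ whenever $s_0\longmapsto_r T_0$ and for $1\le i\le n$ either $s_i\longmapsto_r T_i$ or $T_i=s_i$; $\longrightarrow_r^*$ is the reflexive-transitive closure. For possibly infinite sets $\mathcal S,\mathcal S'$ of resource terms, $\mathcal S\mathrel{\widetilde{\longrightarrow}_r^*}\mathcal S'$ means: there exist an index set $I$, resource terms $s_i$ and finite sums $S'_i$ ($i\in I$) with $\mathcal S=\{s_i : i\in I\}$, $\mathcal S'=\bigcup_{i\in I}S'_i$ and $s_i\longrightarrow_r^* S'_i$ for all $i$. Taylor approximation $\ltimes$ is defined inductively by $x\ltimes x$; $s\ltimes M\Rightarrow\lambda x.s\ltimes\lambda x.M$; ($s\ltimes M$ and $t_i\ltimes N$ for all $i$) $\Rightarrow\langle s\rangle[t_1,\dots,t_n]\ltimes(M)N$; $\mathcal T(M)=\{s : s\ltimes M\}$. *)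

theory Defs
  imports Main "HOL-Library.Multiset"
begin

codatatype trm = Var nat | Lam trm | App trm trm

primcorec lift :: "nat \<Rightarrow> trm \<Rightarrow> trm" where
  "lift c M = (case M of
      Var i \<Rightarrow> Var (if i < c then i else Suc i)
    | Lam P \<Rightarrow> Lam (lift (Suc c) P)
    | App P Q \<Rightarrow> App (lift c P) (lift c Q))"

primcorec subst :: "nat \<Rightarrow> trm \<Rightarrow> trm \<Rightarrow> trm" where
  "subst k N M = (case M of
      Var i \<Rightarrow> (if i = k then (lift 0 ^^ k) N else Var (if k < i then i - 1 else i))
    | Lam P \<Rightarrow> Lam (subst (Suc k) N P)
    | App P Q \<Rightarrow> App (subst k N P) (subst k N Q))"

datatype dir = DBody | DFun | DArg

fun at_pos :: "trm \<Rightarrow> dir list \<Rightarrow> trm option" where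
  "at_pos M [] = Some M"
| "at_pos M (d # ds) = (case (M, d) of
      (Lam P, DBody) \<Rightarrow> at_pos P ds
    | (App P Q, DFun) \<Rightarrow> at_pos P ds
    | (App P Q, DArg) \<Rightarrow> at_pos Q ds
    | _ \<Rightarrow> None)"

definition is_branch :: "trm \<Rightarrow> (nat \<Rightarrow> dir) \<Rightarrow> bool" where
  "is_branch M f \<longleftrightarrow> (\<forall>n. at_pos M (map f [0..<n]) \<noteq> None)"

definition lam001 :: "trm \<Rightarrow> bool" where
  "lam001 M \<longleftrightarrow> (\<forall>f. is_branch M f \<longrightarrow> (\<exists>\<^sub>\<infinity>n. f n = DArg))"

inductive beta :: "trm \<Rightarrow> trm \<Rightarrow> bool" where
  beta_redex: "beta (App (Lam M) N) (subst 0 N M)"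
| beta_lam: "beta M M' \<Longrightarrow> beta (Lam M) (Lam M')"
| beta_fun: "beta M M' \<Longrightarrow> beta (App M N) (App M' N)"
| beta_arg: "beta N N' \<Longrightarrow> beta (App M N) (App M N')"

datatype rtrm = RVar nat | RLam rtrm | RApp rtrm "rtrm multiset"

primrec rlift :: "rtrm \<Rightarrow> nat \<Rightarrow> rtrm" where
  "rlift (RVar i) c = RVar (if i < c then i else Suc i)"
| "rlift (RLam s) c = RLam (rlift s (Suc c))"
| "rlift (RApp s ts) c = RApp (rlift s c) (image_mset (\<lambda>t. rlift t c) ts)"

text \<open>rsub k ts s s': s' is obtained from s by substituting the elements of the bag ts
  bijectively for the free occurrences of index k (one element per occurrence).
  The set of all such s' is the resource substitution; it is empty when the number
  of occurrences differs from the size of ts.\<close>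
inductive rsub :: "nat \<Rightarrow> rtrm multiset \<Rightarrow> rtrm \<Rightarrow> rtrm \<Rightarrow> bool"
  and rsubs :: "nat \<Rightarrow> rtrm multiset \<Rightarrow> rtrm multiset \<Rightarrow> rtrm multiset \<Rightarrow> bool" where
  rsub_hit: "rsub k {#t#} (RVar k) (((\<lambda>u. rlift u 0) ^^ k) t)"
| rsub_miss: "i \<noteq> k \<Longrightarrow> rsub k {#} (RVar i) (RVar (if k < i then i - 1 else i))"
| rsub_lam: "rsub (Suc k) ts s s' \<Longrightarrow> rsub k ts (RLam s) (RLam s')"
| rsub_app: "rsub k ts0 s s' \<Longrightarrow> rsubs k ts1 us us' \<Longrightarrow> rsub k (ts0 + ts1) (RApp s us) (RApp s' us')"
| rsubs_empty: "rsubs k {#} {#} {#}"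
| rsubs_add: "rsub k ts0 u u' \<Longrightarrow> rsubs k ts1 us us' \<Longrightarrow>
     rsubs k (ts0 + ts1) (add_mset u us) (add_mset u' us')"

definition rsubst :: "rtrm \<Rightarrow> rtrm multiset \<Rightarrow> rtrm set" where
  "rsubst s ts = {s'. rsub 0 ts s s'}"

text \<open>Simple resource reduction (terms resp. monomials to finite sums = finite sets).\<close>
inductive rred :: "rtrm \<Rightarrow> rtrm set \<Rightarrow> bool"
  and rredm :: "rtrm multiset \<Rightarrow> rtrm multiset set \<Rightarrow> bool" where
  rred_redex: "rred (RApp (RLam s) ts) (rsubst s ts)"
| rred_lam: "rred s S \<Longrightarrow> rred (RLam s) (RLam ` S)"
| rred_fun: "rred s S \<Longrightarrow> rred (RApp s ts) ((\<lambda>s'. RApp s' ts) ` S)"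
| rred_arg: "rredm ts TS \<Longrightarrow> rred (RApp s ts) ((\<lambda>ts'. RApp s ts') ` TS)"
| rredm_elem: "rred s S \<Longrightarrow> rredm (add_mset s ts) ((\<lambda>s'. add_mset s' ts) ` S)"

text \<open>Reduction of finite sums: sum_{i=0}^n s_i --> sum_{i=0}^n T_i, with s_0 |-> T_0 and
  each other s_i either reducing or kept.\<close>
definition sred :: "rtrm set \<Rightarrow> rtrm set \<Rightarrow> bool" where
  "sred S S' \<longleftrightarrow> (\<exists>s0 T0 ps. rred s0 T0 \<and>
      (\<forall>(s, T) \<in> set ps. rred s T \<or> T = {s}) \<and>
      S = insert s0 (fst ` set ps) \<and> S' = T0 \<union> \<Union> (snd ` set ps))"

abbreviation sred_star :: "rtrm set \<Rightarrow> rtrm set \<Rightarrow> bool" where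
  "sred_star \<equiv> sred\<^sup>*\<^sup>*"

text \<open>Extension to possibly infinite sets. A family (s_i, S'_i)_{i in I} is represented
  by the set of its pairs (this loses nothing, as only images and unions matter).\<close>
definition sred_tilde :: "rtrm set \<Rightarrow> rtrm set \<Rightarrow> bool" where
  "sred_tilde \<SS> \<SS>' \<longleftrightarrow> (\<exists>I :: (rtrm \<times> rtrm set) set.
      \<SS> = fst ` I \<and> \<SS>' = \<Union> (snd ` I) \<and>
      (\<forall>(s, S') \<in> I. finite S' \<and> sred_star {s} S'))"

inductive taylor :: "rtrm \<Rightarrow> trm \<Rightarrow> bool" where
  taylor_var: "taylor (RVar x) (Var x)"
| taylor_lam: "taylor s M \<Longrightarrow> taylor (RLam s) (Lam M)"
| taylor_app: "taylor s M \<Longrightarrow> (\<forall>t\<in>#ts. taylor t N) \<Longrightarrow> taylor (RApp s ts) (App M N)"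

definition Taylor :: "trm \<Rightarrow> rtrm set" where
  "Taylor M = {s. taylor s M}"

end

theory Submission
  imports Defs
begin


lemma lift_Var[simp]: "lift c (Var i) = Var (if i < c then i else Suc i)"
  by (subst lift.code) simp
lemma lift_Lam[simp]: "lift c (Lam P) = Lam (lift (Suc c) P)"
  by (subst lift.code) simp
lemma lift_App[simp]: "lift c (App P Q) = App (lift c P) (lift c Q)"
  by (subst lift.code) simp
lemma subst_Var[simp]: "subst k N (Var i) = (if i = k then (lift 0 ^^ k) N else Var (if k < i then i - 1 else i))"
  by (subst subst.code) simp
lemma subst_Lam[simp]: "subst k N (Lam P) = Lam (subst (Suc k) N P)"
  by (subst subst.code) simp
lemma subst_App[simp]: "subst k N (App P Q) = App (subst k N P) (subst k N Q)"
  by (subst subst.code) simp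

inductive_cases tayVarE: "taylor (RVar j) M"
inductive_cases tayLamE: "taylor (RLam s) M"
inductive_cases tayAppE: "taylor (RApp s ts) M"
inductive_cases tayVarE2: "taylor s (Var i)"
inductive_cases tayLamE2: "taylor s (Lam M)"
inductive_cases tayAppE2: "taylor s (App M N)"

primrec rsz :: "rtrm \<Rightarrow> nat" where
  "rsz (RVar i) = 1"
| "rsz (RLam s) = Suc (rsz s)"
| "rsz (RApp s ts) = Suc (rsz s + sum_mset (image_mset rsz ts))"

lemma rsz_rlift[simp]: "rsz (rlift s c) = rsz s"
proof (induction s arbitrary: c)
  case (RApp s ts)
  have "image_mset (\<lambda>t. rsz (rlift t c)) ts = image_mset rsz ts"
    using RApp.IH(2) by (intro image_mset_cong) simp
  then show ?case using RApp.IH(1) by (simp add: multiset.map_comp comp_def)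
qed simp_all

lemma rsz_rlift_pow[simp]: "rsz (((\<lambda>u. rlift u 0) ^^ k) t) = rsz t"
  by (induction k) auto

lemma taylor_lift: "taylor s M \<Longrightarrow> taylor (rlift s c) (lift c M)"
proof (induction arbitrary: c rule: taylor.induct)
  case (taylor_var x) then show ?case by (auto intro: taylor.intros)
next
  case (taylor_lam s M) then show ?case by (auto intro: taylor.intros)
next
  case (taylor_app s M ts N) then show ?case by (auto intro!: taylor.intros)
qed

lemma taylor_lift_pow: "taylor s M \<Longrightarrow> taylor (((\<lambda>u. rlift u 0) ^^ k) s) ((lift 0 ^^ k) M)"
  by (induction k) (auto intro: taylor_lift)

lemma taylor_lift_inv: "taylor t (lift c M) \<Longrightarrow> \<exists>s. taylor s M \<and> t = rlift s c"
proof (induction t arbitrary: c M)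
  case (RVar x)
  then obtain i where M: "M = Var i"
    by (cases M) (auto elim: tayVarE)
  with RVar have "lift c (Var i) = Var x" by (auto elim: tayVarE)
  then have "RVar x = rlift (RVar i) c" by (simp split: if_splits)
  then show ?case using M by (auto intro: taylor.intros)
next
  case (RLam t)
  then obtain P where M: "M = Lam P" and h: "taylor t (lift (Suc c) P)"
    by (cases M) (auto elim!: tayLamE)
  from RLam.IH[OF h] obtain s where "taylor s P" "t = rlift s (Suc c)" by blast
  then show ?case using M by (auto intro!: taylor.intros exI[of _ "RLam s"])
next
  case (RApp t0 us)
  from RApp.prems obtain P Q where M: "M = App P Q"
    by (cases M) (auto elim!: tayAppE)
  with RApp.prems have h0: "taylor t0 (lift c P)" and hs: "\<forall>u\<in>#us. taylor u (lift c Q)"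
    by (auto elim!: tayAppE)
  from RApp.IH(1)[OF h0] obtain s0 where s0: "taylor s0 P" "t0 = rlift s0 c" by blast
  have "\<forall>u\<in>#us. \<exists>s. taylor s Q \<and> u = rlift s c" using RApp.IH(2) hs by blast
  then obtain f where f: "\<forall>u\<in>#us. taylor (f u) Q \<and> u = rlift (f u) c" by metis
  let ?ss = "image_mset f us"
  have "image_mset (\<lambda>t. rlift t c) ?ss = us"
  proof -
    have "image_mset ((\<lambda>t. rlift t c) \<circ> f) us = image_mset id us"
      by (rule image_mset_cong) (use f in auto)
    then show ?thesis by (simp add: multiset.map_comp)
  qed
  then have "RApp t0 us = rlift (RApp s0 ?ss) c" using s0 by simp
  moreover have "taylor (RApp s0 ?ss) M" using s0 f M by (auto intro!: taylor.intros)
  ultimately show ?case by blast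
qed

lemma taylor_lift_pow_inv: "taylor t ((lift 0 ^^ k) M) \<Longrightarrow> \<exists>s. taylor s M \<and> t = ((\<lambda>u. rlift u 0) ^^ k) s"
proof (induction k arbitrary: t)
  case 0 then show ?case by auto
next
  case (Suc k)
  then obtain s1 where "taylor s1 ((lift 0 ^^ k) M)" "t = rlift s1 0"
    using taylor_lift_inv by fastforce
  moreover from Suc.IH[OF this(1)] obtain s where "taylor s M" "s1 = ((\<lambda>u. rlift u 0) ^^ k) s" by blast
  ultimately show ?case by auto
qed



lemma taylor_subst_fwd:
  shows "rsub k ts s s' \<Longrightarrow> taylor s M \<Longrightarrow> (\<forall>t\<in>#ts. taylor t N) \<Longrightarrow> taylor s' (subst k N M)"
    and "rsubs k ts us us' \<Longrightarrow> (\<forall>u\<in>#us. taylor u M) \<Longrightarrow> (\<forall>t\<in>#ts. taylor t N) \<Longrightarrow> (\<forall>u'\<in>#us'. taylor u' (subst k N M))"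
proof (induction arbitrary: M and M rule: rsub_rsubs.inducts)
  case (rsub_hit k t)
  then show ?case by (auto elim!: tayVarE intro: taylor_lift_pow)
next
  case (rsub_miss i k)
  then show ?case by (auto elim!: tayVarE intro: taylor.intros)
next
  case (rsub_lam k ts s s')
  then show ?case by (auto elim!: tayLamE intro!: taylor.intros)
next
  case (rsub_app k ts0 s s' ts1 us us')
  from rsub_app.prems obtain P Q where M: "M = App P Q" "taylor s P" "\<forall>u\<in>#us. taylor u Q"
    by (auto elim!: tayAppE)
  have "taylor s' (subst k N P)" using rsub_app.IH(1)[OF M(2)] rsub_app.prems by auto
  moreover have "\<forall>u'\<in>#us'. taylor u' (subst k N Q)" using rsub_app.IH(2)[OF M(3)] rsub_app.prems by auto
  ultimately show ?case using M by (auto intro!: taylor.intros)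
next
  case (rsubs_empty k)
  then show ?case by simp
next
  case (rsubs_add k ts0 u u' ts1 us us')
  then show ?case by auto
qed

lemma rsubs_build:
  assumes "\<forall>u\<in>#us. \<exists>s ts. taylor s Q \<and> (\<forall>t\<in>#ts. taylor t N) \<and> rsub k ts s u"
  shows "\<exists>ss tss. (\<forall>s\<in>#ss. taylor s Q) \<and> (\<forall>t\<in>#tss. taylor t N) \<and> rsubs k tss ss us"
  using assms
proof (induction us)
  case empty
  show ?case by (intro exI[of _ "{#}"]) (auto intro: rsub_rsubs.intros)
next
  case (add u us)
  then obtain ss tss where h: "\<forall>s\<in>#ss. taylor s Q" "\<forall>t\<in>#tss. taylor t N" "rsubs k tss ss us" by auto
  from add.prems obtain s ts where h2: "taylor s Q" "\<forall>t\<in>#ts. taylor t N" "rsub k ts s u" by auto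
  have "rsubs k (ts + tss) (add_mset s ss) (add_mset u us)" using h h2 by (auto intro: rsub_rsubs.intros)
  then show ?case using h h2 by (intro exI[of _ "add_mset s ss"] exI[of _ "ts + tss"]) auto
qed

lemma taylor_subst_bwd:
  "taylor t (subst k N M) \<Longrightarrow> \<exists>s ts. taylor s M \<and> (\<forall>u\<in>#ts. taylor u N) \<and> rsub k ts s t"
proof (induction t arbitrary: k M)
  case (RVar j)
  show ?case
  proof (cases M)
    case (Var i)
    show ?thesis
    proof (cases "i = k")
      case True
      with RVar Var obtain u where "taylor u N" "RVar j = ((\<lambda>u. rlift u 0) ^^ k) u"
        using taylor_lift_pow_inv by fastforce
      then show ?thesis using Var True
        by (intro exI[of _ "RVar k"] exI[of _ "{#u#}"]) (auto intro: taylor.intros rsub_rsubs.intros)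
    next
      case False
      with RVar Var have "RVar j = RVar (if k < i then i - 1 else i)" by (auto elim: tayVarE)
      then have "rsub k {#} (RVar i) (RVar j)" using rsub_miss[of i k] False by simp
      then show ?thesis using Var False
        by (intro exI[of _ "RVar i"] exI[of _ "{#}"]) (auto intro: taylor.intros rsub_rsubs.intros)
    qed
  next
    case (Lam x2) with RVar show ?thesis by (auto elim: tayVarE)
  next
    case (App x31 x32) with RVar show ?thesis by (auto elim: tayVarE)
  qed
next
  case (RLam t)
  show ?case
  proof (cases M)
    case (Var i)
    show ?thesis
    proof (cases "i = k")
      case True
      with RLam Var obtain u where "taylor u N" "RLam t = ((\<lambda>u. rlift u 0) ^^ k) u"
        using taylor_lift_pow_inv by fastforce
      then show ?thesis using Var True
        by (intro exI[of _ "RVar k"] exI[of _ "{#u#}"]) (auto intro: taylor.intros rsub_rsubs.intros)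
    next
      case False
      with RLam Var show ?thesis by (auto elim: tayLamE)
    qed
  next
    case (Lam P)
    with RLam.prems have "taylor t (subst (Suc k) N P)" by (auto elim: tayLamE)
    from RLam.IH[OF this] obtain s ts where "taylor s P" "\<forall>u\<in>#ts. taylor u N" "rsub (Suc k) ts s t" by blast
    then show ?thesis using Lam
      by (intro exI[of _ "RLam s"] exI[of _ ts]) (auto intro: taylor.intros rsub_rsubs.intros)
  next
    case (App x31 x32) with RLam show ?thesis by (auto elim: tayLamE)
  qed
next
  case (RApp t0 us)
  show ?case
  proof (cases M)
    case (Var i)
    show ?thesis
    proof (cases "i = k")
      case True
      with RApp.prems Var obtain u where "taylor u N" "RApp t0 us = ((\<lambda>u. rlift u 0) ^^ k) u"
        using taylor_lift_pow_inv by fastforce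
      then show ?thesis using Var True
        by (intro exI[of _ "RVar k"] exI[of _ "{#u#}"]) (auto intro: taylor.intros rsub_rsubs.intros)
    next
      case False
      with RApp.prems Var show ?thesis by (auto elim: tayAppE)
    qed
  next
    case (Lam x2) with RApp.prems show ?thesis by (auto elim: tayAppE)
  next
    case (App P Q)
    with RApp.prems have h0: "taylor t0 (subst k N P)" and hs: "\<forall>u\<in>#us. taylor u (subst k N Q)"
      by (auto elim: tayAppE)
    from RApp.IH(1)[OF h0] obtain s0 ts0 where a: "taylor s0 P" "\<forall>u\<in>#ts0. taylor u N" "rsub k ts0 s0 t0" by blast
    have "\<forall>u\<in>#us. \<exists>s ts. taylor s Q \<and> (\<forall>t\<in>#ts. taylor t N) \<and> rsub k ts s u"
      using RApp.IH(2) hs by blast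
    from rsubs_build[OF this] obtain ss tss where b: "\<forall>s\<in>#ss. taylor s Q" "\<forall>t\<in>#tss. taylor t N" "rsubs k tss ss us" by blast
    have "rsub k (ts0 + tss) (RApp s0 ss) (RApp t0 us)" using a b by (auto intro: rsub_rsubs.intros)
    then show ?thesis using a b App
      by (intro exI[of _ "RApp s0 ss"] exI[of _ "ts0 + tss"]) (auto intro: taylor.intros)
  qed
qed



lemma rsub_size:
  shows "rsub k ts s s' \<Longrightarrow> rsz s' + size ts = rsz s + sum_mset (image_mset rsz ts)"
    and "rsubs k ts us us' \<Longrightarrow> sum_mset (image_mset rsz us') + size ts = sum_mset (image_mset rsz us) + sum_mset (image_mset rsz ts)"
proof (induction rule: rsub_rsubs.inducts)
  case (rsub_app k ts0 s s' ts1 us us')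
  then show ?case by simp
next
  case (rsubs_add k ts0 u u' ts1 us us')
  then show ?case by simp
qed simp_all

lemma rred_size:
  shows "rred s S \<Longrightarrow> \<forall>x\<in>S. rsz x < rsz s"
    and "rredm ts TS \<Longrightarrow> \<forall>x\<in>TS. sum_mset (image_mset rsz x) < sum_mset (image_mset rsz ts)"
proof (induction rule: rred_rredm.inducts)
  case (rred_redex s ts)
  show ?case
  proof
    fix x assume "x \<in> rsubst s ts"
    then have "rsub 0 ts s x" by (simp add: rsubst_def)
    from rsub_size(1)[OF this] show "rsz x < rsz (RApp (RLam s) ts)" by simp
  qed
next
  case (rred_lam s S) then show ?case by simp
next
  case (rred_fun s S ts) then show ?case by simp
next
  case (rred_arg ts TS s) then show ?case by simp
next
  case (rredm_elem s S ts) then show ?case by simp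
qed



lemma fin_msets: "finite A \<Longrightarrow> finite {M. set_mset M \<subseteq> A \<and> size M \<le> n}"
proof -
  assume A: "finite A"
  have "{M. set_mset M \<subseteq> A \<and> size M \<le> n} \<subseteq> mset ` {xs. set xs \<subseteq> A \<and> length xs \<le> n}"
  proof
    fix M assume "M \<in> {M. set_mset M \<subseteq> A \<and> size M \<le> n}"
    moreover obtain xs where "M = mset xs" using ex_mset by metis
    ultimately show "M \<in> mset ` {xs. set xs \<subseteq> A \<and> length xs \<le> n}" by auto
  qed
  moreover have "finite (mset ` {xs. set xs \<subseteq> A \<and> length xs \<le> n})"
    by (rule finite_imageI) (rule finite_lists_length_le[OF A])
  ultimately show ?thesis by (rule finite_subset)
qed

lemma fin_submsets: "finite {M. M \<subseteq># ts}"
proof -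
  have "{M. M \<subseteq># ts} \<subseteq> {M. set_mset M \<subseteq> set_mset ts \<and> size M \<le> size ts}"
  proof
    fix M assume "M \<in> {M. M \<subseteq># ts}"
    then have "M \<subseteq># ts" by simp
    then show "M \<in> {M. set_mset M \<subseteq> set_mset ts \<and> size M \<le> size ts}"
      using set_mset_mono size_mset_mono by blast
  qed
  then show ?thesis using fin_msets[of "set_mset ts" "size ts"] finite_subset by blast
qed

lemma rsubs_struct:
  shows "rsub k ts s s' \<Longrightarrow> True"
    and "rsubs k ts us us' \<Longrightarrow> size us' = size us \<and> (\<forall>u'\<in>#us'. \<exists>u\<in>#us. \<exists>ts0. ts0 \<subseteq># ts \<and> rsub k ts0 u u')"
proof (induction rule: rsub_rsubs.inducts)
  case (rsubs_add k ts0 u u' ts1 us us')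
  have a: "ts0 \<subseteq># ts0 + ts1" by simp
  have b: "\<And>x. x \<subseteq># ts1 \<Longrightarrow> x \<subseteq># ts0 + ts1"
    by (metis subset_mset.order_trans mset_subset_eq_add_right)
  show ?case
  proof (intro conjI ballI)
    show "size (add_mset u' us') = size (add_mset u us)" using rsubs_add.IH(2) by simp
  next
    fix v assume "v \<in># add_mset u' us'"
    then show "\<exists>w\<in>#add_mset u us. \<exists>ts0a. ts0a \<subseteq># ts0 + ts1 \<and> rsub k ts0a w v"
    proof (cases "v = u'")
      case True then show ?thesis using rsubs_add.hyps(1) a by auto
    next
      case False
      then have "v \<in># us'" using \<open>v \<in># add_mset u' us'\<close> by auto
      then obtain w ts0a where "w \<in># us" "ts0a \<subseteq># ts1" "rsub k ts0a w v" using rsubs_add.IH(2) by blast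
      then show ?thesis using b by auto
    qed
  qed
qed auto

inductive_cases rsubVarE: "rsub k ts (RVar i) s'"
inductive_cases rsubLamE: "rsub k ts (RLam s) s'"
inductive_cases rsubAppE: "rsub k ts (RApp s us) s'"

lemma finite_rsub: "finite {s'. rsub k ts s s'}"
proof (induction s arbitrary: k ts)
  case (RVar i)
  have "{s'. rsub k ts (RVar i) s'} \<subseteq> {((\<lambda>u. rlift u 0) ^^ k) t | t. t \<in># ts} \<union> {RVar (if k < i then i - 1 else i)}"
    by (auto elim: rsubVarE)
  moreover have "finite {((\<lambda>u. rlift u 0) ^^ k) t | t. t \<in># ts}" by simp
  ultimately show ?case by (meson finite_Un finite.insertI finite.emptyI finite_subset)
next
  case (RLam s)
  have "{s'. rsub k ts (RLam s) s'} \<subseteq> RLam ` {s'. rsub (Suc k) ts s s'}"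
    by (auto elim: rsubLamE)
  then show ?case using RLam.IH finite_subset by blast
next
  case (RApp s us)
  define A where "A = (\<Union>u\<in>set_mset us. \<Union>ts0\<in>{M. M \<subseteq># ts}. {u'. rsub k ts0 u u'})"
  have fA: "finite A" unfolding A_def
    by (intro finite_UN_I) (auto intro: RApp.IH(2) fin_submsets)
  define B where "B = (\<Union>ts0\<in>{M. M \<subseteq># ts}. {a. rsub k ts0 s a})"
  have fB: "finite B" unfolding B_def
    by (intro finite_UN_I) (auto intro: RApp.IH(1) fin_submsets)
  have "{s'. rsub k ts (RApp s us) s'} \<subseteq> (\<lambda>(a,b). RApp a b) ` (B \<times> {M. set_mset M \<subseteq> A \<and> size M \<le> size us})"
  proof
    fix s' assume "s' \<in> {s'. rsub k ts (RApp s us) s'}"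
    then obtain ts0 ts1 a b where h: "ts = ts0 + ts1" "rsub k ts0 s a" "rsubs k ts1 us b" "s' = RApp a b"
      by (auto elim: rsubAppE)
    from rsubs_struct(2)[OF h(3)] have "size b = size us" "\<forall>u'\<in>#b. \<exists>u\<in>#us. \<exists>ts0. ts0 \<subseteq># ts1 \<and> rsub k ts0 u u'"
      by auto
    then have sb: "size b \<le> size us" by simp
    have "set_mset b \<subseteq> A"
    proof
      fix v assume "v \<in># b"
      then obtain w ts0a where w: "w \<in># us" "ts0a \<subseteq># ts1" "rsub k ts0a w v"
        using \<open>\<forall>u'\<in>#b. \<exists>u\<in>#us. \<exists>ts0. ts0 \<subseteq># ts1 \<and> rsub k ts0 u u'\<close> by blast
      have "ts0a \<subseteq># ts" using w(2) h(1) by (metis subset_mset.order_trans mset_subset_eq_add_right)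
      then show "v \<in> A" unfolding A_def using w by blast
    qed
    note this sb
    moreover have "ts0 \<subseteq># ts" using h(1) by simp
    then have "a \<in> B" unfolding B_def using h(2) by blast
    ultimately show "s' \<in> (\<lambda>(a,b). RApp a b) ` (B \<times> {M. set_mset M \<subseteq> A \<and> size M \<le> size us})"
      using h(4) by auto
  qed
  moreover have "finite ((\<lambda>(a,b). RApp a b) ` (B \<times> {M. set_mset M \<subseteq> A \<and> size M \<le> size us}))"
    using fA fB fin_msets by auto
  ultimately show ?case using finite_subset by blast
qed

lemma finite_rsubst: "finite (rsubst s ts)"
  unfolding rsubst_def by (rule finite_rsub)



inductive P :: "rtrm \<Rightarrow> rtrm set \<Rightarrow> bool" where
  P_refl: "P x {x}"
| P_step: "rred x T \<Longrightarrow> finite T \<Longrightarrow> (\<forall>t\<in>T. P t (G t)) \<Longrightarrow> P x (\<Union>t\<in>T. G t)"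

lemma P_one: "rred x T \<Longrightarrow> finite T \<Longrightarrow> P x T"
  using P_step[of x T "\<lambda>t. {t}"] by (auto intro: P_refl)

lemma P_finite: "P x S \<Longrightarrow> finite S"
  by (induction rule: P.induct) auto

lemma P_trans: "P x S \<Longrightarrow> (\<forall>y\<in>S. P y (H y)) \<Longrightarrow> P x (\<Union>y\<in>S. H y)"
proof (induction arbitrary: H rule: P.induct)
  case (P_refl x) then show ?case by simp
next
  case (P_step x T G)
  have "P x (\<Union>t\<in>T. (\<Union>y\<in>G t. H y))"
    using P_step.hyps P_step.IH P_step.prems by (intro P.P_step) auto
  then show ?case by (simp add: UN_UN_flatten)
qed

lemma P_ctx:
  assumes red: "\<And>x T. rred x T \<Longrightarrow> rred (C x) (C ` T)" and inj: "inj C"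
  shows "P s S \<Longrightarrow> P (C s) (C ` S)"
proof (induction rule: P.induct)
  case (P_refl x) then show ?case by (simp add: P.P_refl)
next
  case (P_step x T G)
  have "P (C x) (\<Union>u\<in>C ` T. C ` G (inv C u))"
  proof (rule P.P_step)
    show "rred (C x) (C ` T)" using red P_step.hyps by blast
    show "finite (C ` T)" using P_step.hyps by blast
    show "\<forall>u\<in>C ` T. P u (C ` G (inv C u))" using P_step.IH inj by auto
  qed
  moreover have "(\<Union>u\<in>C ` T. C ` G (inv C u)) = C ` (\<Union>t\<in>T. G t)" using inj by auto
  ultimately show ?case by simp
qed

lemma P_lam: "P s S \<Longrightarrow> P (RLam s) (RLam ` S)"
  by (rule P_ctx) (auto intro: rred_rredm.intros simp: inj_def)

lemma P_fun: "P s S \<Longrightarrow> P (RApp s ts) ((\<lambda>s'. RApp s' ts) ` S)"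
  by (rule P_ctx[of "\<lambda>s'. RApp s' ts"]) (auto intro: rred_rredm.intros simp: inj_def)

lemma P_elem: "P u U \<Longrightarrow> P (RApp s (add_mset u rest)) ((\<lambda>v. RApp s (add_mset v rest)) ` U)"
proof (rule P_ctx[of "\<lambda>v. RApp s (add_mset v rest)"])
  fix x T assume "rred x T"
  then have "rredm (add_mset x rest) ((\<lambda>s'. add_mset s' rest) ` T)" by (rule rredm_elem)
  then have "rred (RApp s (add_mset x rest)) (RApp s ` ((\<lambda>s'. add_mset s' rest) ` T))" by (rule rred_arg)
  then show "rred (RApp s (add_mset x rest)) ((\<lambda>v. RApp s (add_mset v rest)) ` T)"
    by (simp add: image_image)
qed (auto simp: inj_def)

lemma P_bag:
  "(\<forall>p\<in>#ps. P (fst p) (snd p)) \<Longrightarrow>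
   P (RApp s (rest + image_mset fst ps)) {RApp s (rest + b) | b. rel_mset (\<lambda>p v. v \<in> snd p) ps b}"
proof (induction ps arbitrary: rest)
  case empty
  then show ?case by (simp add: rel_mset_Zero_iff P_refl)
next
  case (add p ps)
  obtain u U where p: "p = (u, U)" by (cases p)
  let ?S1 = "{RApp s (add_mset u rest + b) | b. rel_mset (\<lambda>p v. v \<in> snd p) ps b}"
  have IH: "P (RApp s (add_mset u rest + image_mset fst ps)) ?S1"
    using add.IH[of "add_mset u rest"] add.prems by auto
  define H where "H y = {RApp s (add_mset v (rest + b)) | v b. v \<in> U \<and> y = RApp s (add_mset u rest + b)}" for y
  have H: "\<forall>y\<in>?S1. P y (H y)"
  proof
    fix y assume "y \<in> ?S1"
    then obtain b0 where y: "y = RApp s (add_mset u rest + b0)" by blast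
    have "H y = (\<lambda>v. RApp s (add_mset v (rest + b0))) ` U" unfolding H_def y by auto
    moreover have "P u U" using add.prems p by auto
    from P_elem[OF this, of s "rest + b0"]
    have "P (RApp s (add_mset u (rest + b0))) ((\<lambda>v. RApp s (add_mset v (rest + b0))) ` U)" .
    ultimately show "P y (H y)" using y by simp
  qed
  have eq: "(\<Union>y\<in>?S1. H y) = {RApp s (rest + b) | b. rel_mset (\<lambda>p v. v \<in> snd p) (add_mset p ps) b}"
  proof
    show "(\<Union>y\<in>?S1. H y) \<subseteq> {RApp s (rest + b) | b. rel_mset (\<lambda>p v. v \<in> snd p) (add_mset p ps) b}"
    proof
      fix z assume "z \<in> (\<Union>y\<in>?S1. H y)"
      then obtain b v where "rel_mset (\<lambda>p v. v \<in> snd p) ps b" "v \<in> U" "z = RApp s (add_mset v (rest + b))"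
        unfolding H_def by auto
      then show "z \<in> {RApp s (rest + b) | b. rel_mset (\<lambda>p v. v \<in> snd p) (add_mset p ps) b}"
        using p by (auto intro!: exI[of _ "add_mset v b"] rel_mset_Plus)
    qed
  next
    show "{RApp s (rest + b) | b. rel_mset (\<lambda>p v. v \<in> snd p) (add_mset p ps) b} \<subseteq> (\<Union>y\<in>?S1. H y)"
    proof
      fix z assume "z \<in> {RApp s (rest + b) | b. rel_mset (\<lambda>p v. v \<in> snd p) (add_mset p ps) b}"
      then obtain b where z: "z = RApp s (rest + b)" "rel_mset (\<lambda>p v. v \<in> snd p) (add_mset p ps) b" by blast
      from msed_rel_invL[OF z(2)] obtain b1 v where "b = add_mset v b1" "v \<in> U" "rel_mset (\<lambda>p v. v \<in> snd p) ps b1"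
        using p by auto
      then show "z \<in> (\<Union>y\<in>?S1. H y)" unfolding H_def using z(1) by auto
    qed
  qed
  have "P (RApp s (add_mset u rest + image_mset fst ps)) (\<Union>y\<in>?S1. H y)"
    by (rule P_trans[OF IH H])
  then show ?case using eq p by simp
qed



type_synonym dmd = "rtrm \<times> rtrm set option"

definition dem :: "dmd multiset \<Rightarrow> rtrm \<Rightarrow> nat" where
  "dem D z = size (filter_mset (\<lambda>p. fst p = z) D)"
definition sp :: "dmd multiset \<Rightarrow> rtrm \<Rightarrow> nat" where
  "sp D z = size (filter_mset (\<lambda>p. case snd p of Some T \<Rightarrow> z \<in> T | None \<Rightarrow> False) D)"
definition rc :: "dmd multiset \<Rightarrow> nat" where
  "rc D = size (filter_mset (\<lambda>p. snd p \<noteq> None) D)"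
definition valid :: "dmd multiset \<Rightarrow> bool" where
  "valid D \<longleftrightarrow> (\<forall>p\<in>#D. \<forall>T. snd p = Some T \<longrightarrow> rred (fst p) T \<and> finite T)"
definition keeps :: "dmd multiset \<Rightarrow> rtrm set" where
  "keeps D = {z. (z, None) \<in># D}"

lemma dem_add[simp]: "dem (A + B) z = dem A z + dem B z" by (simp add: dem_def)
lemma sp_add[simp]: "sp (A + B) z = sp A z + sp B z" by (simp add: sp_def)
lemma rc_add[simp]: "rc (A + B) = rc A + rc B" by (simp add: rc_def)
lemma dem_single[simp]: "dem {#p#} z = (if fst p = z then 1 else 0)" by (simp add: dem_def)
lemma sp_single[simp]: "sp {#(y, oo)#} z = (case oo of Some T \<Rightarrow> (if z \<in> T then 1 else 0) | None \<Rightarrow> 0)"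
  by (simp add: sp_def split: option.splits)
lemma dem_empty[simp]: "dem {#} z = 0" by (simp add: dem_def)
lemma sp_empty[simp]: "sp {#} z = 0" by (simp add: sp_def)

lemma dem_sum: "dem (sum f K) z = (\<Sum>t\<in>K. dem (f t) z)"
  by (induction K rule: infinite_finite_induct) auto
lemma sp_sum: "sp (sum f K) z = (\<Sum>t\<in>K. sp (f t) z)"
  by (induction K rule: infinite_finite_induct) auto
lemma rc_sum: "rc (sum f K) = (\<Sum>t\<in>K. rc (f t))"
  by (induction K rule: infinite_finite_induct) (auto simp: rc_def)

lemma size_filter0: "size (filter_mset Q M) = 0 \<longleftrightarrow> (\<forall>x\<in>#M. \<not> Q x)"
  unfolding size_eq_0_iff_empty filter_mset_eq_mempty_iff by blast

lemma size_filter_pos: "size (filter_mset Q M) \<noteq> 0 \<longleftrightarrow> (\<exists>x\<in>#M. Q x)"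
  using size_filter0[of Q M] by auto

lemma sred_one:
  assumes "finite X" "x \<in> X" "rred x T"
  shows "sred X ((X - {x}) \<union> T)"
proof -
  obtain xs where xs: "set xs = X - {x}" using finite_list assms(1) by (meson finite_Diff)
  let ?ps = "map (\<lambda>s. (s, {s})) xs"
  have "fst ` set ?ps = X - {x}" using xs by (simp add: image_image)
  moreover have "\<Union>(snd ` set ?ps) = X - {x}" using xs by (auto simp: image_image)
  moreover have "\<forall>(s, T)\<in>set ?ps. rred s T \<or> T = {s}" by auto
  ultimately show ?thesis unfolding sred_def using assms
    by (intro exI[of _ x] exI[of _ T] exI[of _ ?ps]) auto
qed

lemma config:
  "finite X \<Longrightarrow> valid D \<Longrightarrow> (\<forall>z. dem D z = (if z \<in> X then 1 else 0) + sp D z) \<Longrightarrow> sred_star X (keeps D)"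
proof (induction "rc D" arbitrary: X D rule: less_induct)
  case less
  note fin = less.prems(1) and val = less.prems(2) and inv = less.prems(3)
  show ?case
  proof (cases "rc D = 0")
    case True
    then have none: "\<forall>p\<in>#D. snd p = None" unfolding rc_def size_filter0 by blast
    then have "\<forall>z. sp D z = 0" unfolding sp_def size_filter0 by auto
    with inv have dz: "\<forall>z. dem D z = (if z \<in> X then 1 else 0)" by simp
    have "keeps D = X"
    proof
      show "keeps D \<subseteq> X"
      proof
        fix z assume "z \<in> keeps D"
        then have "(z, None) \<in># D" by (simp add: keeps_def)
        then have "dem D z \<noteq> 0" unfolding dem_def size_filter_pos by force
        then show "z \<in> X" using dz[rule_format, of z] by (simp split: if_splits)
      qed
    next
      show "X \<subseteq> keeps D"
      proof
        fix z assume "z \<in> X"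
        then have "dem D z \<noteq> 0" using dz by simp
        then obtain p where "p \<in># D" "fst p = z" unfolding dem_def size_filter_pos by blast
        then have "p = (z, None)" using none by (cases p) auto
        then show "z \<in> keeps D" using \<open>p \<in># D\<close> unfolding keeps_def by simp
      qed
    qed
    then show ?thesis by (simp only: rtranclp.rtrancl_refl)
  next
    case False
    define R where "R = {z. \<exists>T. (z, Some T) \<in># D}"
    have finR: "finite R"
    proof -
      have "R \<subseteq> fst ` set_mset D" unfolding R_def by force
      then show ?thesis by (rule finite_subset) simp
    qed
    obtain p0 where "p0 \<in># D" "snd p0 \<noteq> None" using False unfolding rc_def size_filter_pos by blast
    then have Rne: "R \<noteq> {}" unfolding R_def by (metis (mono_tags) empty_iff mem_Collect_eq option.exhaust prod.collapse)
    define m where "m = Max (rsz ` R)"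
    obtain y where y: "y \<in> R" "rsz y = m" using Rne finR unfolding m_def
      by (metis (mono_tags, lifting) Max_in finite_imageI image_iff image_is_empty)
    have ymax: "\<forall>z\<in>R. rsz z \<le> rsz y" using finR y unfolding m_def by auto
    have "sp D y = 0"
    proof -
      have "size (filter_mset (\<lambda>p. case snd p of Some T \<Rightarrow> y \<in> T | None \<Rightarrow> False) D) = 0"
      proof (rule ccontr)
        assume "size (filter_mset (\<lambda>p. case snd p of Some T \<Rightarrow> y \<in> T | None \<Rightarrow> False) D) \<noteq> 0"
        then obtain q where q: "q \<in># D" "case snd q of Some T \<Rightarrow> y \<in> T | None \<Rightarrow> False"
          unfolding size_filter_pos by blast
        then obtain T where T: "snd q = Some T" "y \<in> T" by (cases "snd q") auto
        have "\<forall>T'. snd q = Some T' \<longrightarrow> rred (fst q) T' \<and> finite T'"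
          using val q(1) unfolding valid_def by blast
        then have rq: "rred (fst q) T" using T(1) by simp
        have "rsz y < rsz (fst q)" using rred_size(1)[OF rq] T(2) by blast
        moreover have "(fst q, Some T) \<in># D" using q(1) T(1) by (metis prod.collapse)
        then have "fst q \<in> R" unfolding R_def by blast
        ultimately show False using ymax by force
      qed
      then show ?thesis by (simp add: sp_def)
    qed
    moreover have "dem D y \<noteq> 0"
    proof -
      obtain T where "(y, Some T) \<in># D" using y(1) unfolding R_def by blast
      then show ?thesis unfolding dem_def size_filter_pos by force
    qed
    ultimately have "y \<in> X" using inv by (metis add.right_neutral)
    then have RXne: "R \<inter> X \<noteq> {}" using y by blast
    define m2 where "m2 = Min (rsz ` (R \<inter> X))"
    obtain x where x: "x \<in> R \<inter> X" "rsz x = m2" using RXne finR unfolding m2_def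
      by (metis (mono_tags, lifting) Min_in finite_Int finite_imageI image_iff image_is_empty)
    have xmin: "\<forall>z\<in>R \<inter> X. rsz x \<le> rsz z" using finR x unfolding m2_def by auto
    obtain T where xT: "(x, Some T) \<in># D" using x(1) unfolding R_def by blast
    have rxT: "rred x T" and fT: "finite T" using val xT unfolding valid_def by auto
    have Tsmall: "\<forall>t\<in>T. rsz t < rsz x" using rred_size(1)[OF rxT] by blast
    have xT': "x \<notin> T" using Tsmall by blast
    define K where "K = T \<inter> X"
    have finK: "finite K" using fT unfolding K_def by simp
    have KnotR: "\<forall>t\<in>K. t \<notin> R" using xmin Tsmall unfolding K_def by force
    \<comment> \<open>for t in K all demands are keeps\<close>
    have cntK: "\<forall>t\<in>K. count D (t, None) \<ge> 2"
    proof
      fix t assume tK: "t \<in> K"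
      have allNone: "filter_mset (\<lambda>p. fst p = t) D = filter_mset (\<lambda>p. p = (t, None)) D"
      proof (rule filter_mset_cong0)
        fix q assume "q \<in># D"
        show "(fst q = t) = (q = (t, None))"
        proof
          assume "fst q = t"
          then show "q = (t, None)" using KnotR tK \<open>q \<in># D\<close> unfolding R_def
            by (metis (mono_tags) mem_Collect_eq option.exhaust prod.collapse)
        qed simp
      qed
      have "sp D t \<ge> 1"
      proof -
        have "(x, Some T) \<in># filter_mset (\<lambda>p. case snd p of Some T \<Rightarrow> t \<in> T | None \<Rightarrow> False) D"
          using xT tK unfolding K_def by simp
        then have "size (filter_mset (\<lambda>p. case snd p of Some T \<Rightarrow> t \<in> T | None \<Rightarrow> False) D) \<noteq> 0"
          unfolding size_filter_pos by force
        then show ?thesis unfolding sp_def by linarith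
      qed
      moreover have "t \<in> X" using tK unfolding K_def by simp
      ultimately have "dem D t \<ge> 2" using inv by (metis add_le_cancel_left one_add_one)
      moreover have "dem D t = count D (t, None)" unfolding dem_def allNone
        by (simp add: filter_eq_replicate_mset)
      ultimately show "count D (t, None) \<ge> 2" by simp
    qed
    define A where "A = (\<Sum>t\<in>K. {#(t, None)#} :: dmd multiset)"
    have cA: "count A q = (if \<exists>t\<in>K. q = (t, None) then 1 else 0)" for q
    proof -
      have "count A q = (\<Sum>t\<in>K. if q = (t, None) then 1 else 0)" unfolding A_def
        by (simp add: count_sum) (rule sum.cong, auto)
      also have "\<dots> = (\<Sum>t\<in>K \<inter> {fst q}. if q = (t, None) then 1 else 0)"
        by (rule sum.mono_neutral_right) (use finK in auto)
      also have "\<dots> = (if \<exists>t\<in>K. q = (t, None) then 1 else 0)"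
        by (cases "fst q \<in> K") auto
      finally show ?thesis .
    qed
    have Asub: "A \<subseteq># D - {#(x, Some T)#}"
    proof (rule mset_subset_eqI)
      fix q
      show "count A q \<le> count (D - {#(x, Some T)#}) q"
      proof (cases "\<exists>t\<in>K. q = (t, None)")
        case True
        then obtain t where t: "t \<in> K" "q = (t, None)" by blast
        then have c2: "count D q \<ge> 2" using cntK by auto
        have c1: "count A q = 1" using cA True by simp
        have "count (D - {#(x, Some T)#}) q = count D q" using t(2) by simp
        then show ?thesis using c1 c2 by linarith
      next
        case False then show ?thesis using cA by simp
      qed
    qed
    define D' where "D' = D - {#(x, Some T)#} - A"
    have Ddec: "D = D' + A + {#(x, Some T)#}"
    proof -
      have "D' + A = D - {#(x, Some T)#}" unfolding D'_def using Asub by (rule subset_mset.diff_add)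
      moreover have "D - {#(x, Some T)#} + {#(x, Some T)#} = D" using xT by simp
      ultimately show ?thesis by simp
    qed
    have cnt: "count D q = count D' q + count A q + count {#(x, Some T)#} q" for q
      by (subst Ddec) simp
    have demA: "dem A z = (if z \<in> K then 1 else 0)" for z
      unfolding A_def dem_sum by (simp add: finK)
    have spA: "sp A z = 0" for z unfolding A_def sp_sum by simp
    have rcA: "rc A = 0" unfolding A_def rc_sum by (simp add: rc_def)
    define X' where "X' = (X - {x}) \<union> T"
    have finX': "finite X'" using fin fT unfolding X'_def by simp
    have valD': "valid D'"
    proof -
      have "set_mset D' \<subseteq> set_mset D" unfolding D'_def by (meson in_diffD subsetI)
      then show ?thesis using val unfolding valid_def by blast
    qed
    have rcD': "rc D' < rc D"
    proof -
      have "rc D = rc D' + rc A + rc {#(x, Some T)#}" by (subst Ddec) (simp only: rc_add)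
      moreover have "rc {#(x, Some T)#} = 1" by (simp add: rc_def)
      ultimately show ?thesis using rcA by simp
    qed
    have xX: "x \<in> X" using x by blast
    have invD': "\<forall>z. dem D' z = (if z \<in> X' then 1 else 0) + sp D' z"
    proof
      fix z
      have "dem D z = dem D' z + dem A z + dem {#(x, Some T)#} z" by (subst Ddec) (simp only: dem_add)
      then have e1: "dem D z = dem D' z + (if z \<in> K then 1 else 0) + (if x = z then 1 else 0)"
        using demA by simp
      have "sp D z = sp D' z + sp A z + sp {#(x, Some T)#} z" by (subst Ddec) (simp only: sp_add)
      then have e2: "sp D z = sp D' z + (if z \<in> T then 1 else 0)"
        using spA by simp
      show "dem D' z = (if z \<in> X' then 1 else 0) + sp D' z"
        using inv[rule_format, of z] e1 e2 xX xT' unfolding X'_def K_def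
        by (cases "z = x"; cases "z \<in> T"; cases "z \<in> X") auto
    qed
    have keepsD': "keeps D' = keeps D"
    proof -
      have "(z, None) \<in># D' \<longleftrightarrow> (z, None) \<in># D" for z
      proof -
        have c: "count D (z, None) = count D' (z, None) + (if z \<in> K then 1 else 0)"
          using cnt[of "(z, None)"] cA[of "(z, None)"] by simp
        show ?thesis
        proof (cases "z \<in> K")
          case True
          then have "count D' (z, None) \<ge> 1" using c cntK by fastforce
          then show ?thesis using c by (simp del: count_greater_zero_iff add: count_greater_zero_iff[symmetric])
        next
          case False
          then show ?thesis using c by (simp del: count_greater_zero_iff add: count_greater_zero_iff[symmetric])
        qed
      qed
      then show ?thesis unfolding keeps_def by blast
    qed
    have step: "sred X X'" unfolding X'_def by (rule sred_one[OF fin xX rxT])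
    have "sred_star X' (keeps D')" using less.hyps[OF rcD' finX' valD' invD'] .
    from converse_rtranclp_into_rtranclp[OF step this] show ?thesis using keepsD' by simp
  qed
qed



lemma in_sum_mset_iff: "finite T \<Longrightarrow> a \<in># sum f T \<longleftrightarrow> (\<exists>t\<in>T. a \<in># f t)"
  by (induction T rule: finite_induct) auto

lemma treeD: "P x S \<Longrightarrow> \<exists>D. valid D \<and> (\<forall>z. dem D z = (if z = x then 1 else 0) + sp D z) \<and> keeps D = S"
proof (induction rule: P.induct)
  case (P_refl x)
  show ?case
    by (rule exI[of _ "{#(x, None)#}"]) (auto simp: valid_def keeps_def)
next
  case (P_step x T G)
  from P_step.IH obtain Dt where Dt: "\<forall>t\<in>T. valid (Dt t) \<and> (\<forall>z. dem (Dt t) z = (if z = t then 1 else 0) + sp (Dt t) z) \<and> keeps (Dt t) = G t"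
    by metis
  define D where "D = {#(x, Some T)#} + (\<Sum>t\<in>T. Dt t)"
  have fin: "finite T" by fact
  have "valid D" unfolding D_def valid_def
  proof
    fix p assume "p \<in># {#(x, Some T)#} + (\<Sum>t\<in>T. Dt t)"
    then have "p = (x, Some T) \<or> (\<exists>t\<in>T. p \<in># Dt t)" using in_sum_mset_iff[OF fin, of p Dt] by auto
    then show "\<forall>T'. snd p = Some T' \<longrightarrow> rred (fst p) T' \<and> finite T'"
      using Dt P_step.hyps unfolding valid_def by auto
  qed
  moreover have "\<forall>z. dem D z = (if z = x then 1 else 0) + sp D z"
  proof
    fix z
    have "dem D z = (if x = z then 1 else 0) + (\<Sum>t\<in>T. dem (Dt t) z)"
      unfolding D_def dem_add dem_sum by simp
    also have "(\<Sum>t\<in>T. dem (Dt t) z) = (\<Sum>t\<in>T. (if z = t then 1 else 0) + sp (Dt t) z)"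
      using Dt by (intro sum.cong) auto
    also have "\<dots> = (if z \<in> T then 1 else 0) + (\<Sum>t\<in>T. sp (Dt t) z)"
      using fin by (simp add: sum.distrib)
    finally have a: "dem D z = (if x = z then 1 else 0) + (if z \<in> T then 1 else 0) + (\<Sum>t\<in>T. sp (Dt t) z)" by simp
    have b: "sp D z = (if z \<in> T then 1 else 0) + (\<Sum>t\<in>T. sp (Dt t) z)"
      unfolding D_def sp_add sp_sum by simp
    show "dem D z = (if z = x then 1 else 0) + sp D z" using a b by auto
  qed
  moreover have "keeps D = (\<Union>t\<in>T. G t)"
  proof -
    have "(z, None) \<in># D \<longleftrightarrow> (\<exists>t\<in>T. (z, None) \<in># Dt t)" for z
      unfolding D_def using in_sum_mset_iff[OF fin, of "(z, None)" Dt] by simp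
    moreover have k: "\<forall>t\<in>T. \<forall>z. (z, None) \<in># Dt t \<longleftrightarrow> z \<in> G t"
      using Dt unfolding keeps_def by auto
    ultimately show ?thesis unfolding keeps_def by auto
  qed
  ultimately show ?case by blast
qed

lemma P_sred: "P x S \<Longrightarrow> sred_star {x} S"
proof -
  assume "P x S"
  from treeD[OF this] obtain D where "valid D" "\<forall>z. dem D z = (if z = x then 1 else 0) + sp D z" "keeps D = S"
    by blast
  then show ?thesis using config[of "{x}" D] by auto
qed

definition Sim :: "trm \<Rightarrow> trm \<Rightarrow> bool" where
  "Sim M N \<longleftrightarrow> (\<forall>s\<in>Taylor M. \<exists>S. P s S \<and> S \<subseteq> Taylor N) \<and>
                (\<forall>t\<in>Taylor N. \<exists>s S. s \<in> Taylor M \<and> P s S \<and> S \<subseteq> Taylor N \<and> t \<in> S)"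

lemma Sim_refl: "Sim M M"
  unfolding Sim_def by (auto intro: P_refl)

lemma Sim_trans: assumes "Sim M Q" "Sim Q N" shows "Sim M N"
proof -
  from assms(2) obtain f where f: "\<forall>y\<in>Taylor Q. P y (f y) \<and> f y \<subseteq> Taylor N"
    unfolding Sim_def by metis
  have A: "\<forall>s\<in>Taylor M. \<exists>S. P s S \<and> S \<subseteq> Taylor N"
  proof
    fix s assume "s \<in> Taylor M"
    then obtain S1 where S1: "P s S1" "S1 \<subseteq> Taylor Q" using assms(1) unfolding Sim_def by blast
    have "P s (\<Union>y\<in>S1. f y)" using P_trans[OF S1(1)] f S1(2) by blast
    moreover have "(\<Union>y\<in>S1. f y) \<subseteq> Taylor N" using f S1(2) by blast
    ultimately show "\<exists>S. P s S \<and> S \<subseteq> Taylor N" by blast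
  qed
  have B: "\<forall>t\<in>Taylor N. \<exists>s S. s \<in> Taylor M \<and> P s S \<and> S \<subseteq> Taylor N \<and> t \<in> S"
  proof
    fix t assume "t \<in> Taylor N"
    then obtain y Y where y: "y \<in> Taylor Q" "P y Y" "Y \<subseteq> Taylor N" "t \<in> Y"
      using assms(2) unfolding Sim_def by blast
    then obtain s S1 where S1: "s \<in> Taylor M" "P s S1" "S1 \<subseteq> Taylor Q" "y \<in> S1"
      using assms(1) unfolding Sim_def by blast
    define g where "g z = (if z = y then Y else f z)" for z
    have "\<forall>z\<in>S1. P z (g z)" using f S1(3) y unfolding g_def by auto
    then have "P s (\<Union>z\<in>S1. g z)" using P_trans[OF S1(2)] by blast
    moreover have "(\<Union>z\<in>S1. g z) \<subseteq> Taylor N" using f S1(3) y unfolding g_def by auto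
    moreover have "t \<in> (\<Union>z\<in>S1. g z)" using S1(4) y(4) unfolding g_def by auto
    ultimately show "\<exists>s S. s \<in> Taylor M \<and> P s S \<and> S \<subseteq> Taylor N \<and> t \<in> S" using S1(1) by blast
  qed
  show ?thesis unfolding Sim_def using A B by blast
qed

lemma Sim_tilde: assumes "Sim M N" shows "sred_tilde (Taylor M) (Taylor N)"
proof -
  define I where "I = {(s, S). s \<in> Taylor M \<and> P s S \<and> S \<subseteq> Taylor N}"
  have "Taylor M = fst ` I"
  proof
    show "Taylor M \<subseteq> fst ` I"
    proof
      fix s assume "s \<in> Taylor M"
      then obtain S where "P s S" "S \<subseteq> Taylor N" using assms unfolding Sim_def by blast
      then show "s \<in> fst ` I" unfolding I_def using \<open>s \<in> Taylor M\<close> by (auto intro!: image_eqI[of _ _ "(s, S)"])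
    qed
  qed (auto simp: I_def)
  moreover have "Taylor N = \<Union>(snd ` I)"
  proof
    show "Taylor N \<subseteq> \<Union>(snd ` I)"
    proof
      fix t assume "t \<in> Taylor N"
      then obtain s S where "s \<in> Taylor M" "P s S" "S \<subseteq> Taylor N" "t \<in> S" using assms unfolding Sim_def by blast
      then show "t \<in> \<Union>(snd ` I)" unfolding I_def by (auto intro!: bexI[of _ "(s, S)"])
    qed
  qed (auto simp: I_def)
  moreover have "\<forall>(s, S')\<in>I. finite S' \<and> sred_star {s} S'"
    unfolding I_def using P_finite P_sred by auto
  ultimately show ?thesis unfolding sred_tilde_def by blast
qed



lemma Taylor_Lam: "s \<in> Taylor (Lam M) \<longleftrightarrow> (\<exists>s'. s = RLam s' \<and> s' \<in> Taylor M)"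
  unfolding Taylor_def by (auto elim: tayLamE2 intro: taylor.intros)

lemma Taylor_App: "s \<in> Taylor (App M N) \<longleftrightarrow> (\<exists>s0 ts. s = RApp s0 ts \<and> s0 \<in> Taylor M \<and> (\<forall>t\<in>#ts. t \<in> Taylor N))"
  unfolding Taylor_def by (auto elim: tayAppE2 intro: taylor.intros)

lemma Sim_lam: assumes "Sim M M'" shows "Sim (Lam M) (Lam M')"
  unfolding Sim_def
proof (intro conjI ballI)
  fix s assume "s \<in> Taylor (Lam M)"
  then obtain s' where s': "s = RLam s'" "s' \<in> Taylor M" using Taylor_Lam by blast
  then obtain S where "P s' S" "S \<subseteq> Taylor M'" using assms unfolding Sim_def by blast
  then show "\<exists>S. P s S \<and> S \<subseteq> Taylor (Lam M')" using s' P_lam Taylor_Lam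
    by (intro exI[of _ "RLam ` S"]) auto
next
  fix t assume "t \<in> Taylor (Lam M')"
  then obtain t' where t': "t = RLam t'" "t' \<in> Taylor M'" using Taylor_Lam by blast
  then obtain s S where "s \<in> Taylor M" "P s S" "S \<subseteq> Taylor M'" "t' \<in> S" using assms unfolding Sim_def by blast
  then show "\<exists>s S. s \<in> Taylor (Lam M) \<and> P s S \<and> S \<subseteq> Taylor (Lam M') \<and> t \<in> S" using t' P_lam Taylor_Lam
    by (intro exI[of _ "RLam s"] exI[of _ "RLam ` S"]) auto
qed

lemma Sim_fun: assumes "Sim M M'" shows "Sim (App M N) (App M' N)"
  unfolding Sim_def
proof (intro conjI ballI)
  fix s assume "s \<in> Taylor (App M N)"
  then obtain s0 ts where s: "s = RApp s0 ts" "s0 \<in> Taylor M" "\<forall>t\<in>#ts. t \<in> Taylor N" using Taylor_App by blast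
  then obtain S where "P s0 S" "S \<subseteq> Taylor M'" using assms unfolding Sim_def by blast
  then show "\<exists>S. P s S \<and> S \<subseteq> Taylor (App M' N)" using s P_fun Taylor_App
    by (intro exI[of _ "(\<lambda>s'. RApp s' ts) ` S"]) auto
next
  fix t assume "t \<in> Taylor (App M' N)"
  then obtain t0 ts where t: "t = RApp t0 ts" "t0 \<in> Taylor M'" "\<forall>u\<in>#ts. u \<in> Taylor N" using Taylor_App by blast
  then obtain s S where "s \<in> Taylor M" "P s S" "S \<subseteq> Taylor M'" "t0 \<in> S" using assms unfolding Sim_def by blast
  then show "\<exists>s S. s \<in> Taylor (App M N) \<and> P s S \<and> S \<subseteq> Taylor (App M' N) \<and> t \<in> S" using t P_fun Taylor_App
    by (intro exI[of _ "RApp s ts"] exI[of _ "(\<lambda>s'. RApp s' ts) ` S"]) auto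
qed

lemma rel_mset_set:
  "rel_mset R ps b \<Longrightarrow> v \<in># b \<Longrightarrow> \<exists>p\<in>#ps. R p v"
  by (induction rule: rel_mset_induct) auto

lemma bag_sub:
  assumes "\<forall>p\<in>#ps. snd p \<subseteq> Taylor N'" "s0 \<in> Taylor M"
  shows "{RApp s0 b | b. rel_mset (\<lambda>p v. v \<in> snd p) ps b} \<subseteq> Taylor (App M N')"
proof
  fix z assume "z \<in> {RApp s0 b | b. rel_mset (\<lambda>p v. v \<in> snd p) ps b}"
  then obtain b where z: "z = RApp s0 b" "rel_mset (\<lambda>p v. v \<in> snd p) ps b" by blast
  have "\<forall>v\<in>#b. v \<in> Taylor N'"
  proof
    fix v assume "v \<in># b"
    from rel_mset_set[OF z(2) this] obtain p where "p \<in># ps" "v \<in> snd p" by blast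
    then show "v \<in> Taylor N'" using assms(1) by blast
  qed
  then show "z \<in> Taylor (App M N')" using z(1) assms(2) Taylor_App by blast
qed

lemma Sim_arg: assumes "Sim N N'" shows "Sim (App M N) (App M N')"
  unfolding Sim_def
proof (intro conjI ballI)
  fix s assume "s \<in> Taylor (App M N)"
  then obtain s0 ts where s: "s = RApp s0 ts" "s0 \<in> Taylor M" "\<forall>t\<in>#ts. t \<in> Taylor N" using Taylor_App by blast
  from assms obtain f where f: "\<forall>u\<in>Taylor N. P u (f u) \<and> f u \<subseteq> Taylor N'"
    unfolding Sim_def by metis
  define ps where "ps = image_mset (\<lambda>u. (u, f u)) ts"
  have "\<forall>p\<in>#ps. P (fst p) (snd p)" using f s(3) unfolding ps_def by auto
  from P_bag[OF this, of s0 "{#}"]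
  have "P (RApp s0 ts) {RApp s0 b | b. rel_mset (\<lambda>p v. v \<in> snd p) ps b}"
    unfolding ps_def by (simp add: multiset.map_comp comp_def)
  moreover have "{RApp s0 b | b. rel_mset (\<lambda>p v. v \<in> snd p) ps b} \<subseteq> Taylor (App M N')"
    by (rule bag_sub) (use f s in \<open>auto simp: ps_def\<close>)
  ultimately show "\<exists>S. P s S \<and> S \<subseteq> Taylor (App M N')" using s(1) by blast
next
  fix t assume "t \<in> Taylor (App M N')"
  then obtain s0 b where t: "t = RApp s0 b" "s0 \<in> Taylor M" "\<forall>v\<in>#b. v \<in> Taylor N'" using Taylor_App by blast
  have "\<forall>v\<in>#b. \<exists>u U. u \<in> Taylor N \<and> P u U \<and> U \<subseteq> Taylor N' \<and> v \<in> U"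
    using assms t(3) unfolding Sim_def by blast
  then have "\<forall>v\<in>#b. \<exists>p. fst p \<in> Taylor N \<and> P (fst p) (snd p) \<and> snd p \<subseteq> Taylor N' \<and> v \<in> snd p"
    by auto
  from bchoice[OF this] obtain g where g: "\<forall>v\<in>#b. fst (g v) \<in> Taylor N \<and> P (fst (g v)) (snd (g v)) \<and> snd (g v) \<subseteq> Taylor N' \<and> v \<in> snd (g v)"
    by blast
  define ps where "ps = image_mset g b"
  define ts where "ts = image_mset fst ps"
  have "\<forall>p\<in>#ps. P (fst p) (snd p)" using g unfolding ps_def by auto
  from P_bag[OF this, of s0 "{#}"]
  have "P (RApp s0 ts) {RApp s0 b | b. rel_mset (\<lambda>p v. v \<in> snd p) ps b}"
    unfolding ts_def by simp
  moreover have "{RApp s0 b | b. rel_mset (\<lambda>p v. v \<in> snd p) ps b} \<subseteq> Taylor (App M N')"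
    by (rule bag_sub) (use g t in \<open>auto simp: ps_def\<close>)
  moreover have "RApp s0 ts \<in> Taylor (App M N)"
    using g t(2) Taylor_App unfolding ts_def ps_def by auto
  moreover have "rel_mset (\<lambda>p v. v \<in> snd p) ps b"
  proof -
    have "rel_mset (\<lambda>x y. y \<in> snd (g x)) b b"
      by (rule multiset.rel_refl_strong) (use g in auto)
    then show ?thesis unfolding ps_def by (simp add: multiset.rel_map)
  qed
  ultimately show "\<exists>s S. s \<in> Taylor (App M N) \<and> P s S \<and> S \<subseteq> Taylor (App M N') \<and> t \<in> S"
    using t(1) by blast
qed

lemma Sim_redex: "Sim (App (Lam M) N) (subst 0 N M)"
  unfolding Sim_def
proof (intro conjI ballI)
  fix s assume "s \<in> Taylor (App (Lam M) N)"
  then obtain s0 ts where s: "s = RApp (RLam s0) ts" "taylor s0 M" "\<forall>t\<in>#ts. taylor t N"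
    using Taylor_App Taylor_Lam unfolding Taylor_def by fastforce
  have "P s (rsubst s0 ts)" unfolding s(1) by (intro P_one rred_redex finite_rsubst)
  moreover have "rsubst s0 ts \<subseteq> Taylor (subst 0 N M)"
    unfolding rsubst_def Taylor_def using taylor_subst_fwd(1) s by blast
  ultimately show "\<exists>S. P s S \<and> S \<subseteq> Taylor (subst 0 N M)" by blast
next
  fix t assume "t \<in> Taylor (subst 0 N M)"
  then obtain s0 ts where h: "taylor s0 M" "\<forall>u\<in>#ts. taylor u N" "rsub 0 ts s0 t"
    using taylor_subst_bwd unfolding Taylor_def by blast
  have "RApp (RLam s0) ts \<in> Taylor (App (Lam M) N)" using h unfolding Taylor_def by (auto intro: taylor.intros)
  moreover have "P (RApp (RLam s0) ts) (rsubst s0 ts)" by (intro P_one rred_redex finite_rsubst)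
  moreover have "rsubst s0 ts \<subseteq> Taylor (subst 0 N M)"
    unfolding rsubst_def Taylor_def using taylor_subst_fwd(1) h by blast
  moreover have "t \<in> rsubst s0 ts" using h unfolding rsubst_def by simp
  ultimately show "\<exists>s S. s \<in> Taylor (App (Lam M) N) \<and> P s S \<and> S \<subseteq> Taylor (subst 0 N M) \<and> t \<in> S" by blast
qed

lemma beta_Sim: "beta M N \<Longrightarrow> Sim M N"
  by (induction rule: beta.induct) (auto intro: Sim_redex Sim_lam Sim_fun Sim_arg)

lemma betas_Sim: "beta\<^sup>*\<^sup>* M N \<Longrightarrow> Sim M N"
  by (induction rule: rtranclp_induct) (auto intro: Sim_refl Sim_trans beta_Sim)

theorem mainTheorem5:
  assumes "lam001 M" and "lam001 N" and "beta\<^sup>*\<^sup>* M N"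
  shows "sred_tilde (Taylor M) (Taylor N)"
  using Sim_tilde[OF betas_Sim[OF assms(3)]] .

end
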